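(* Let $\mathcal H=\mathbb{C}^2\otimes\mathbb{C}^2$ with the Bell vectors $\psi_1=\tfrac{1}{\sqrt2}(|0\rangle|0\rangle+|1\rangle|1\rangle)$, $\psi_2=\tfrac{1}{\sqrt2}(|0\rangle|0\rangle-|1\rangle|1\rangle)$, $\psi_3=\tfrac{1}{\sqrt2}(|0\rangle|1\rangle+|1\rangle|0\rangle)$, $\psi_4=\tfrac{1}{\sqrt2}(|0\rangle|1\rangle-|1\rangle|0\rangle)$, let $\Psi_k$ be the orthogonal projector onto $\mathbb{C}\psi_k$, $\Phi_{kl}=\tfrac12(\Psi_k+\Psi_l)$, and for $\epsilon\in[0,1]$ let $W_{\psi_k,\epsilon}=\tfrac14(1-\epsilon)\mathbf 1+\epsilon\Psi_k$. Fix an index $i\in\{1,2,3,4\}$ and numbers $\lambda_1,\dots,\lambda_4\ge 0$ with $\sum_k\lambda_k=1$, and let $$\sigma=\lambda_i\Psi_i+\sum_{j\neq i}\lambda_j\Phi_{ij}.$$ Then the state $$\tilde\sigma=\lambda_i W_{\psi_i,1/3}+\sum_{j\ne i}\lambda_j\Phi_{ij}$$ belongs to $\mathcal D$ and minimizes $\rho\mapsto\|\rho-\sigma\|_{\mathrm{HS}}^2$ over $\rho\in\mathcal D$, and $$E_{\mathrm{HS}}(\sigma)=\lambda_i^2/3.$$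
   Context: $\mathcal T$ denotes the set of states (positive operators of trace one) on $\mathbb{C}^2\otimes\mathbb{C}^2$. The set of disentangled states is $\mathcal D=\{\rho\in\mathcal T:\rho=\sum_k p_k\rho^{(1)}_k\otimes\rho^{(2)}_k,\ p_k\ge0,\ \sum_k p_k=1,\ \rho^{(1)}_k,\rho^{(2)}_k \text{ states on }\mathbb{C}^2\}$. The Hilbert–Schmidt norm is $\|A\|_{\mathrm{HS}}^2=\mathrm{tr}(A^*A)$, and the Hilbert–Schmidt entanglement of a state $\sigma$ is $E_{\mathrm{HS}}(\sigma)=\min_{\rho\in\mathcal D}\|\rho-\sigma\|_{\mathrm{HS}}^2$. *)

theory Defs
  imports "HOL-Analysis.Analysis"
begin

text \<open>Operators on C^2 are matrices complex^2^2 (basis |0>,|1> = indices 0,1 of the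
numeral type 2); operators on C^2 (x) C^2 are matrices indexed by the product type 2 \<times> 2,
with basis |a>|b> = (a,b).\<close>

type_synonym qubit_op = "complex^2^2"
type_synonym vec2 = "complex^(2 \<times> 2)"
type_synonym op2 = "complex^(2 \<times> 2)^(2 \<times> 2)"

definition mtrace :: "complex^'n^'n \<Rightarrow> complex" where
  "mtrace A = (\<Sum>i\<in>UNIV. A $ i $ i)"

definition positive_op :: "complex^'n^'n \<Rightarrow> bool" where
  "positive_op A \<longleftrightarrow> (\<forall>v::complex^'n.
      let q = (\<Sum>i\<in>UNIV. cnj (v $ i) * (\<Sum>j\<in>UNIV. A $ i $ j * v $ j))
      in Im q = 0 \<and> Re q \<ge> 0)"

definition is_state :: "complex^'n^'n \<Rightarrow> bool" where
  "is_state A \<longleftrightarrow> positive_op A \<and> mtrace A = 1"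

definition kron :: "qubit_op \<Rightarrow> qubit_op \<Rightarrow> op2" where
  "kron A B = (\<chi> i j. A $ fst i $ fst j * B $ snd i $ snd j)"

definition disentangled :: "op2 \<Rightarrow> bool" where
  "disentangled \<rho> \<longleftrightarrow> is_state \<rho> \<and>
     (\<exists>(n::nat) (p::nat \<Rightarrow> real) (r1::nat \<Rightarrow> qubit_op) (r2::nat \<Rightarrow> qubit_op).
        (\<forall>k<n. p k \<ge> 0 \<and> is_state (r1 k) \<and> is_state (r2 k)) \<and>
        (\<Sum>k<n. p k) = 1 \<and>
        \<rho> = (\<Sum>k<n. p k *\<^sub>R kron (r1 k) (r2 k)))"

definition hs_sq :: "complex^'n^'m \<Rightarrow> real" where
  "hs_sq A = (\<Sum>i\<in>UNIV. \<Sum>j\<in>UNIV. (cmod (A $ i $ j))\<^sup>2)"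

definition E_HS :: "op2 \<Rightarrow> real" where
  "E_HS \<sigma> = (INF \<rho>\<in>{\<rho>. disentangled \<rho>}. hs_sq (\<rho> - \<sigma>))"

definition bell :: "nat \<Rightarrow> vec2" where
  "bell k = (\<chi> ab. let a = fst ab; b = snd ab in
     (if k = 1 then (if a = 0 \<and> b = 0 then 1 else if a = 1 \<and> b = 1 then 1 else 0)
      else if k = 2 then (if a = 0 \<and> b = 0 then 1 else if a = 1 \<and> b = 1 then -1 else 0)
      else if k = 3 then (if a = 0 \<and> b = 1 then 1 else if a = 1 \<and> b = 0 then 1 else 0)
      else if k = 4 then (if a = 0 \<and> b = 1 then 1 else if a = 1 \<and> b = 0 then -1 else 0)
      else 0) / complex_of_real (sqrt 2))"

definition proj :: "vec2 \<Rightarrow> op2" where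
  "proj \<psi> = (\<chi> x y. \<psi> $ x * cnj (\<psi> $ y))"

definition Psi :: "nat \<Rightarrow> op2" where
  "Psi k = proj (bell k)"

definition Phi :: "nat \<Rightarrow> nat \<Rightarrow> op2" where
  "Phi k l = (1/2) *\<^sub>R (Psi k + Psi l)"

definition Werner :: "nat \<Rightarrow> real \<Rightarrow> op2" where
  "Werner k \<epsilon> = ((1 - \<epsilon>) / 4) *\<^sub>R mat 1 + \<epsilon> *\<^sub>R Psi k"

end

theory Submission
  imports Defs
begin

lemma UNIV2': "(UNIV::2 set) = {0,1}"
  using exhaust_2 by (metis UNIV_2 zero_neq_one insert_commute)
lemma sum2: "sum f (UNIV::2 set) = f 0 + f 1"
  by (simp add: UNIV2')
lemma all2: "(\<forall>x::2. P x) \<longleftrightarrow> P 0 \<and> P 1"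
  by (metis UNIV2' UNIV_I insertE singletonD)
lemma UNIV22: "(UNIV::(2\<times>2) set) = {(0,0),(0,1),(1,0),(1,1)}"
  by (auto simp: UNIV_Times_UNIV[symmetric] UNIV2' simp del: UNIV_Times_UNIV)
lemma sum22: "sum f (UNIV::(2\<times>2) set) = f(0,0)+f(0,1)+f(1,0)+f(1,1)"
  by (simp add: UNIV22 add.assoc)

lemma scaleR_ent: "((c::real) *\<^sub>R (M::complex^'n^'m)) $ i $ j = of_real c * M $ i $ j"
  unfolding vector_scaleR_component by (simp add: scaleR_conv_of_real)
lemma all22: "(\<forall>x::2\<times>2. P x) \<longleftrightarrow> P(0,0) \<and> P(0,1) \<and> P(1,0) \<and> P(1,1)"
  by (auto simp: all2)

lemma sR: "(c::real) *\<^sub>R (z::complex) = of_real c * z"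
  by (simp add: scaleR_conv_of_real)

definition qf :: "complex^'n^'n \<Rightarrow> complex^'n \<Rightarrow> complex" where
  "qf A v = (\<Sum>i\<in>UNIV. cnj (v $ i) * (\<Sum>j\<in>UNIV. A $ i $ j * v $ j))"

lemma positive_op_qf: "positive_op A \<longleftrightarrow> (\<forall>v. Im (qf A v) = 0 \<and> Re (qf A v) \<ge> 0)"
  by (simp add: positive_op_def qf_def Let_def)

lemma qf_add: "qf (A + B) v = qf A v + qf B v"
  unfolding qf_def by (simp add: algebra_simps sum.distrib)

lemma qf_scale: "qf (c *\<^sub>R A) v = of_real c * qf A v"
  unfolding qf_def by (simp add: scaleR_ent sR sum_distrib_left mult_ac)

lemma qf_zero: "qf 0 v = 0"
  unfolding qf_def by simp

lemma qf_sum: "qf (\<Sum>k\<in>S. c k *\<^sub>R M k) v = (\<Sum>k\<in>S. of_real (c k) * qf (M k) v)"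
proof (induction S rule: infinite_finite_induct)
  case (infinite A) then show ?case by (simp add: qf_zero)
next
  case empty then show ?case by (simp add: qf_zero)
next
  case (insert x F) then show ?case by (simp add: qf_add qf_scale)
qed

lemma positive_op_sum:
  assumes "\<And>k. k \<in> S \<Longrightarrow> 0 \<le> c k \<and> positive_op (M k)"
  shows "positive_op (\<Sum>k\<in>S. c k *\<^sub>R M k)"
  unfolding positive_op_qf qf_sum
proof
  fix v
  show "Im (\<Sum>k\<in>S. complex_of_real (c k) * qf (M k) v) = 0 \<and>
        0 \<le> Re (\<Sum>k\<in>S. complex_of_real (c k) * qf (M k) v)"
    using assms by (auto simp: positive_op_qf intro!: sum_nonneg)
qed

definition gproj :: "complex^'n \<Rightarrow> complex^'n^'n" where
  "gproj u = (\<chi> x y. u $ x * cnj (u $ y))"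

lemma qf_gproj: "qf (gproj u) v = cnj (\<Sum>j\<in>UNIV. cnj (u$j) * v$j) * (\<Sum>j\<in>UNIV. cnj (u$j) * v$j)"
proof -
  define s where "s = (\<Sum>j\<in>UNIV. cnj (u$j) * v$j)"
  have inner: "(\<Sum>j\<in>UNIV. gproj u $ i $ j * v $ j) = u$i * s" for i
    unfolding s_def gproj_def by (simp add: sum_distrib_left mult.assoc)
  have "qf (gproj u) v = (\<Sum>i\<in>UNIV. cnj (v$i) * (u$i * s))"
    unfolding qf_def inner by simp
  also have "\<dots> = (\<Sum>i\<in>UNIV. cnj (v$i) * u$i) * s"
    by (simp add: sum_distrib_right mult.assoc)
  also have "(\<Sum>i\<in>UNIV. cnj (v$i) * u$i) = cnj s"
    unfolding s_def by (simp add: mult.commute)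
  finally show ?thesis unfolding s_def .
qed

lemma positive_gproj: "positive_op (gproj u)"
  unfolding positive_op_qf qf_gproj
proof
  fix v
  define s where "s = (\<Sum>j\<in>UNIV. cnj (u$j) * v$j)"
  have "cnj s * s = complex_of_real ((Re s)\<^sup>2 + (Im s)\<^sup>2)"
    by (metis complex_mult_cnj mult.commute)
  then show "Im (cnj s * s) = 0 \<and> 0 \<le> Re (cnj s * s)" by simp
qed

definition unitv :: "complex^'n \<Rightarrow> bool" where
  "unitv u \<longleftrightarrow> (\<Sum>i\<in>UNIV. (cmod (u$i))\<^sup>2) = 1"

lemma mtrace_gproj: "unitv u \<Longrightarrow> mtrace (gproj u) = 1"
proof -
  assume h: "unitv u"
  have "mtrace (gproj u) = (\<Sum>i\<in>UNIV. u$i * cnj (u$i))"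
    unfolding mtrace_def gproj_def by simp
  also have "\<dots> = (\<Sum>i\<in>UNIV. complex_of_real ((cmod (u$i))\<^sup>2))"
    by (rule sum.cong) (simp_all only: complex_norm_square)
  also have "\<dots> = complex_of_real (\<Sum>i\<in>UNIV. (cmod (u$i))\<^sup>2)"
    by (rule of_real_sum[symmetric])
  also have "\<dots> = 1" using h unfolding unitv_def by simp
  finally show ?thesis .
qed

lemma state_gproj: "unitv u \<Longrightarrow> is_state (gproj u)"
  by (simp add: is_state_def positive_gproj mtrace_gproj)

definition tens :: "complex^2 \<Rightarrow> complex^2 \<Rightarrow> vec2" where
  "tens u w = (\<chi> ab. u $ fst ab * w $ snd ab)"

lemma kron_gproj: "kron (gproj u) (gproj w) = gproj (tens u w)"
  by (simp add: vec_eq_iff kron_def gproj_def tens_def mult_ac)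

lemma unitv_tens: "unitv u \<Longrightarrow> unitv w \<Longrightarrow> unitv (tens u w)"
proof -
  assume "unitv u" "unitv w"
  then have a: "(cmod (u$0))\<^sup>2 + (cmod (u$1))\<^sup>2 = 1" "(cmod (w$0))\<^sup>2 + (cmod (w$1))\<^sup>2 = 1"
    by (auto simp: unitv_def sum2)
  have "(\<Sum>i\<in>UNIV. (cmod (tens u w $ i))\<^sup>2) =
      ((cmod (u$0))\<^sup>2 + (cmod (u$1))\<^sup>2) * ((cmod (w$0))\<^sup>2 + (cmod (w$1))\<^sup>2)"
    by (simp add: sum22 tens_def norm_mult power_mult_distrib algebra_simps)
  then show ?thesis using a by (simp add: unitv_def)
qed

lemma mtrace_add: "mtrace (A + B) = mtrace A + mtrace B"
  unfolding mtrace_def by (simp add: sum.distrib)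

lemma mtrace_scale: "mtrace (c *\<^sub>R A) = of_real c * mtrace A"
  unfolding mtrace_def by (simp add: scaleR_ent sR sum_distrib_left)

lemma mtrace_sum: "mtrace (\<Sum>k\<in>S. c k *\<^sub>R M k) = (\<Sum>k\<in>S. of_real (c k) * mtrace (M k))"
proof (induction S rule: infinite_finite_induct)
  case (infinite A) then show ?case by (simp add: mtrace_def)
next
  case empty then show ?case by (simp add: mtrace_def)
next
  case (insert x F) then show ?case by (simp add: mtrace_add mtrace_scale)
qed

lemma sep_intro:
  fixes n :: nat
  assumes "\<And>k. k < n \<Longrightarrow> 0 \<le> p k \<and> unitv (u k) \<and> unitv (w k)"
    and "(\<Sum>k<n. p k) = 1"
    and "\<rho> = (\<Sum>k<n. p k *\<^sub>R kron (gproj (u k)) (gproj (w k)))"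
  shows "disentangled \<rho>"
proof -
  have pos: "positive_op \<rho>" unfolding assms(3) kron_gproj
    by (rule positive_op_sum) (use assms(1) positive_gproj in auto)
  have "mtrace \<rho> = (\<Sum>k<n. of_real (p k))" unfolding assms(3) kron_gproj mtrace_sum
    using assms(1) by (simp add: mtrace_gproj unitv_tens)
  also have "\<dots> = 1" using assms(2) by (metis of_real_1 of_real_sum)
  finally have st: "is_state \<rho>" using pos by (simp add: is_state_def)
  have all: "\<forall>k<n. 0 \<le> p k \<and> is_state (gproj (u k)) \<and> is_state (gproj (w k))"
    using assms(1) state_gproj by blast
  show ?thesis unfolding disentangled_def
    apply (rule conjI[OF st])
    apply (rule_tac x=n in exI)
    apply (rule_tac x=p in exI)
    apply (rule_tac x="\<lambda>k. gproj (u k)" in exI)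
    apply (rule_tac x="\<lambda>k. gproj (w k)" in exI)
    using all assms(2,3) by (intro conjI) simp_all
qed


definition bq :: "nat \<Rightarrow> op2 \<Rightarrow> real" where
 "bq k D = (if k = 1 then Re (D$(0,0)$(0,0) + D$(1,1)$(1,1) + D$(0,0)$(1,1) + D$(1,1)$(0,0)) / 2
   else if k = 2 then Re (D$(0,0)$(0,0) + D$(1,1)$(1,1) - D$(0,0)$(1,1) - D$(1,1)$(0,0)) / 2
   else if k = 3 then Re (D$(0,1)$(0,1) + D$(1,0)$(1,0) + D$(0,1)$(1,0) + D$(1,0)$(0,1)) / 2
   else Re (D$(0,1)$(0,1) + D$(1,0)$(1,0) - D$(0,1)$(1,0) - D$(1,0)$(0,1)) / 2)"

lemma bq_diff: "bq k (A - B) = bq k A - bq k B"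
  by (simp add: bq_def field_simps)

lemma bq_sum: "bq k (\<Sum>j\<in>S. c j *\<^sub>R M j) = (\<Sum>j\<in>S. c j * bq k (M j))"
  by (simp add: bq_def scaleR_ent sum_divide_distrib sum_distrib_left sum.distrib[symmetric]
     sum_subtractf[symmetric] algebra_simps)

lemma bq_trace: "bq 1 D + bq 2 D + bq 3 D + bq 4 D = Re (mtrace D)"
  by (simp add: bq_def mtrace_def sum22 field_simps)

lemma Re_sq_le: "(Re z)\<^sup>2 \<le> (cmod z)\<^sup>2"
  using abs_Re_le_cmod[of z] by (metis abs_ge_zero power2_abs power_mono)

lemma hs_bound: "(bq 1 D)\<^sup>2 + (bq 2 D)\<^sup>2 + (bq 3 D)\<^sup>2 + (bq 4 D)\<^sup>2 \<le> hs_sq D"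
proof -
  define f where "f x y = (cmod (D $ x $ y))\<^sup>2" for x y
  have h: "hs_sq D = f (0,0) (0,0) + f (1,1) (1,1) + f (0,0) (1,1) + f (1,1) (0,0)
     + f (0,1) (0,1) + f (1,0) (1,0) + f (0,1) (1,0) + f (1,0) (0,1)
     + (f (0,0) (0,1) + f (0,0) (1,0) + f (0,1) (0,0) + f (0,1) (1,1)
     + f (1,0) (0,0) + f (1,0) (1,1) + f (1,1) (0,1) + f (1,1) (1,0))"
    by (simp add: hs_sq_def sum22 f_def)
  have nn: "0 \<le> f (0,0) (0,1) + f (0,0) (1,0) + f (0,1) (0,0) + f (0,1) (1,1)
     + f (1,0) (0,0) + f (1,0) (1,1) + f (1,1) (0,1) + f (1,1) (1,0)"
    by (simp add: f_def)
  have r: "(Re (D $ x $ y))\<^sup>2 \<le> f x y" for x y unfolding f_def by (rule Re_sq_le)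
  define a1 where "a1 = Re (D$(0,0)$(0,0))"
  define a2 where "a2 = Re (D$(1,1)$(1,1))"
  define a3 where "a3 = Re (D$(0,0)$(1,1))"
  define a4 where "a4 = Re (D$(1,1)$(0,0))"
  define b1 where "b1 = Re (D$(0,1)$(0,1))"
  define b2 where "b2 = Re (D$(1,0)$(1,0))"
  define b3 where "b3 = Re (D$(0,1)$(1,0))"
  define b4 where "b4 = Re (D$(1,0)$(0,1))"
  have e: "(bq 1 D)\<^sup>2 + (bq 2 D)\<^sup>2 + (bq 3 D)\<^sup>2 + (bq 4 D)\<^sup>2 =
     ((a1+a2)\<^sup>2 + (a3+a4)\<^sup>2 + (b1+b2)\<^sup>2 + (b3+b4)\<^sup>2) / 2"
    by (simp add: bq_def a1_def a2_def a3_def a4_def b1_def b2_def b3_def b4_def power2_eq_square field_simps)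
  have "((a1+a2)\<^sup>2 + (a3+a4)\<^sup>2 + (b1+b2)\<^sup>2 + (b3+b4)\<^sup>2) / 2 =
        a1\<^sup>2 + a2\<^sup>2 + a3\<^sup>2 + a4\<^sup>2 + b1\<^sup>2 + b2\<^sup>2 + b3\<^sup>2 + b4\<^sup>2
        - ((a1-a2)\<^sup>2 + (a3-a4)\<^sup>2 + (b1-b2)\<^sup>2 + (b3-b4)\<^sup>2) / 2"
    by (simp add: power2_eq_square field_simps)
  also have "\<dots> \<le> a1\<^sup>2 + a2\<^sup>2 + a3\<^sup>2 + a4\<^sup>2 + b1\<^sup>2 + b2\<^sup>2 + b3\<^sup>2 + b4\<^sup>2"
    by simp
  also have "\<dots> \<le> hs_sq D" unfolding h a1_def a2_def a3_def a4_def b1_def b2_def b3_def b4_def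
    using r[of "(0,0)" "(0,0)"] r[of "(1,1)" "(1,1)"] r[of "(0,0)" "(1,1)"] r[of "(1,1)" "(0,0)"]
      r[of "(0,1)" "(0,1)"] r[of "(1,0)" "(1,0)"] r[of "(0,1)" "(1,0)"] r[of "(1,0)" "(0,1)"] nn
    by linarith
  finally show ?thesis using e by simp
qed

definition qv :: "complex \<Rightarrow> complex \<Rightarrow> complex^2" where
  "qv a b = (\<chi> j. if j = 0 then a else b)"

lemma qf2: "qf (A::qubit_op) (qv x y) = cnj x * (A$0$0 * x + A$0$1 * y) + cnj y * (A$1$0 * x + A$1$1 * y)"
  by (simp add: qf_def sum2 qv_def)

lemma qubit_state:
  assumes "is_state (A::qubit_op)"
  shows "A$0$0 = of_real (Re (A$0$0))" "A$1$1 = of_real (Re (A$1$1))"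
    "Re (A$0$0) \<ge> 0" "Re (A$1$1) \<ge> 0" "Re (A$0$0) + Re (A$1$1) = 1"
    "A$1$0 = cnj (A$0$1)" "(cmod (A$0$1))\<^sup>2 \<le> Re (A$0$0) * Re (A$1$1)"
proof -
  have q: "Im (qf A v) = 0 \<and> Re (qf A v) \<ge> 0" for v
    using assms by (simp add: is_state_def positive_op_qf)
  have tr: "A$0$0 + A$1$1 = 1" using assms by (simp add: is_state_def mtrace_def sum2)
  from q[of "qv 1 0"] show a0: "A$0$0 = of_real (Re (A$0$0))" "Re (A$0$0) \<ge> 0"
    by (auto simp: qf2 complex_eq_iff)
  from q[of "qv 0 1"] show a1: "A$1$1 = of_real (Re (A$1$1))" "Re (A$1$1) \<ge> 0"
    by (auto simp: qf2 complex_eq_iff)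
  from tr show tr': "Re (A$0$0) + Re (A$1$1) = 1" by (metis one_complex.sel(1) plus_complex.sel(1))
  have im0: "Im (A$0$0) = 0" using a0(1) by (metis Im_complex_of_real)
  have im1: "Im (A$1$1) = 0" using a1(1) by (metis Im_complex_of_real)
  have i1: "Im (A$0$1) + Im (A$1$0) = 0" using q[of "qv 1 1"] im0 im1 by (simp add: qf2)
  have i2: "Re (A$0$1) - Re (A$1$0) = 0" using q[of "qv 1 \<i>"] im0 im1 by (simp add: qf2)
  show h: "A$1$0 = cnj (A$0$1)" using i1 i2 by (simp add: complex_eq_iff)
  define a where "a = Re (A$0$0)"
  define d where "d = Re (A$1$1)"
  define z where "z = A$0$1"
  have A: "A$0$0 = of_real a" "A$1$1 = of_real d" "A$1$0 = cnj z" "A$0$1 = z"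
    using a0 a1 h by (auto simp: a_def d_def z_def)
  have c1: "0 \<le> d * (a * d - (cmod z)\<^sup>2)"
  proof -
    have "Re (qf A (qv (of_real d) (- cnj z))) = d * (a * d - (cmod z)\<^sup>2)"
      by (simp add: qf2 A cmod_power2[unfolded power2_eq_square] algebra_simps power2_eq_square)
    then show ?thesis using q by metis
  qed
  have c2: "0 \<le> a * (a * d - (cmod z)\<^sup>2)"
  proof -
    have "Re (qf A (qv (- z) (of_real a))) = a * (a * d - (cmod z)\<^sup>2)"
      by (simp add: qf2 A cmod_power2[unfolded power2_eq_square] algebra_simps power2_eq_square)
    then show ?thesis using q by metis
  qed
  have "a + d = 1" using tr' a_def d_def by simp
  then have "0 < a \<or> 0 < d" by linarith
  then have "0 \<le> a * d - (cmod z)\<^sup>2" using c1 c2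
    by (metis zero_le_mult_iff not_less)
  then show "(cmod (A$0$1))\<^sup>2 \<le> Re (A$0$0) * Re (A$1$1)" by (simp add: a_def d_def z_def)
qed


lemma amgm: "0 \<le> (m::real) \<Longrightarrow> 0 \<le> P \<Longrightarrow> 0 \<le> Q \<Longrightarrow> m\<^sup>2 \<le> P * Q \<Longrightarrow> 2 * m \<le> P + Q"
proof -
  assume h: "0 \<le> m" "0 \<le> P" "0 \<le> Q" "m\<^sup>2 \<le> P * Q"
  have e: "(P + Q)\<^sup>2 = (P - Q)\<^sup>2 + 4 * (P * Q)" by (simp add: power2_eq_square algebra_simps)
  have "(2 * m)\<^sup>2 = 4 * m\<^sup>2" by (simp add: power2_eq_square)
  also have "\<dots> \<le> (P + Q)\<^sup>2" using h(4) e by (simp add: add_increasing)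
  finally show ?thesis by (rule power2_le_imp_le) (use h in simp)
qed

lemma kron_bq:
  assumes A: "is_state A" and B: "is_state B" and k: "k \<in> {1..4}"
  shows "bq k (kron A B) \<le> 1/2"
proof -
  define a where "a = Re (A$0$0)"
  define d where "d = Re (A$1$1)"
  define z where "z = A$0$1"
  define b where "b = Re (B$0$0)"
  define e where "e = Re (B$1$1)"
  define w where "w = B$0$1"
  note sA = qubit_state[OF A, folded a_def d_def z_def]
  note sB = qubit_state[OF B, folded b_def e_def w_def]
  have EA: "A$0$0 = of_real a" "A$1$1 = of_real d" "A$1$0 = cnj z" "A$0$1 = z"
    using sA by (auto simp: z_def)
  have EB: "B$0$0 = of_real b" "B$1$1 = of_real e" "B$1$0 = cnj w" "B$0$1 = w"
    using sB by (auto simp: w_def)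
  define m where "m = cmod z * cmod w"
  have m0: "0 \<le> m" by (simp add: m_def)
  have msq: "m\<^sup>2 \<le> (a * d) * (b * e)"
    unfolding m_def power_mult_distrib
    by (rule mult_mono) (use sA sB in auto)
  have m1: "2 * m \<le> a * e + d * b"
    by (rule amgm[OF m0]) (use sA sB msq in \<open>auto simp: algebra_simps\<close>)
  have m2: "2 * m \<le> a * b + d * e"
    by (rule amgm[OF m0]) (use sA sB msq in \<open>auto simp: algebra_simps\<close>)
  have one: "a * b + a * e + d * b + d * e = 1"
  proof -
    have "(a + d) * (b + e) = 1" using sA sB by simp
    then show ?thesis by (simp add: algebra_simps)
  qed
  have r1: "\<bar>Re (z * w)\<bar> \<le> m" unfolding m_def by (metis abs_Re_le_cmod norm_mult)
  have r2: "\<bar>Re (z * cnj w)\<bar> \<le> m" unfolding m_def by (metis abs_Re_le_cmod norm_mult complex_mod_cnj)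
  have q1: "bq 1 (kron A B) = (a*b + d*e + 2 * Re (z*w)) / 2"
    by (simp add: bq_def kron_def EA EB)
  have q2: "bq 2 (kron A B) = (a*b + d*e - 2 * Re (z*w)) / 2"
    by (simp add: bq_def kron_def EA EB)
  have q3: "bq 3 (kron A B) = (a*e + d*b + 2 * Re (z * cnj w)) / 2"
    by (simp add: bq_def kron_def EA EB)
  have q4: "bq 4 (kron A B) = (a*e + d*b - 2 * Re (z * cnj w)) / 2"
    by (simp add: bq_def kron_def EA EB)
  have "k = 1 \<or> k = 2 \<or> k = 3 \<or> k = 4" using k by auto
  then show ?thesis using q1 q2 q3 q4 r1 r2 m1 m2 one by (auto simp: abs_le_iff)
qed

lemma sep_bq:
  assumes "disentangled \<rho>" "k \<in> {1..4}"
  shows "bq k \<rho> \<le> 1/2"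
proof -
  obtain n p r1 r2 where h: "\<forall>k<n. p k \<ge> 0 \<and> is_state (r1 k) \<and> is_state (r2 k)"
      "(\<Sum>k<(n::nat). p k) = 1" "\<rho> = (\<Sum>k<n. p k *\<^sub>R kron (r1 k) (r2 k))"
    using assms(1) unfolding disentangled_def by blast
  have "bq k \<rho> = (\<Sum>j<n. p j * bq k (kron (r1 j) (r2 j)))" using h(3) bq_sum by simp
  also have "\<dots> \<le> (\<Sum>j<n. p j * (1/2))"
  proof (rule sum_mono)
    fix j assume "j \<in> {..<n}"
    then have "0 \<le> p j" "bq k (kron (r1 j) (r2 j)) \<le> 1/2"
      using h(1) kron_bq[OF _ _ assms(2)] by auto
    then show "p j * bq k (kron (r1 j) (r2 j)) \<le> p j * (1/2)" by (rule mult_left_mono[rotated])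
  qed
  also have "\<dots> = (\<Sum>j<n. p j) * (1/2)" by (rule sum_distrib_right[symmetric])
  also have "\<dots> = 1/2" using h(2) by simp
  finally show ?thesis .
qed

lemma key4: "(a::real) + b + c + d = 0 \<Longrightarrow> a \<le> -t \<Longrightarrow> 0 \<le> t \<Longrightarrow> 4 * t\<^sup>2 / 3 \<le> a\<^sup>2 + b\<^sup>2 + c\<^sup>2 + d\<^sup>2"
proof -
  assume h: "a + b + c + d = 0" "a \<le> -t" "0 \<le> t"
  have "t\<^sup>2 \<le> (-a)\<^sup>2" by (rule power_mono) (use h in auto)
  then have t: "t\<^sup>2 \<le> a\<^sup>2" by simp
  have ea: "a = -(b + c + d)" using h by linarith
  have "3 * (b\<^sup>2 + c\<^sup>2 + d\<^sup>2) = a\<^sup>2 + ((b - c)\<^sup>2 + (c - d)\<^sup>2 + (b - d)\<^sup>2)"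
    unfolding ea by (simp add: power2_eq_square algebra_simps)
  then have s1: "a\<^sup>2 / 3 \<le> b\<^sup>2 + c\<^sup>2 + d\<^sup>2"
    using zero_le_power2[of "b - c"] zero_le_power2[of "c - d"] zero_le_power2[of "b - d"]
    by (simp add: field_simps)
  have s2: "t\<^sup>2 / 3 \<le> a\<^sup>2 / 3" using t by simp
  show ?thesis using s1 s2 t by linarith
qed

lemma hs_sq_scale: "hs_sq (c *\<^sub>R M) = c\<^sup>2 * hs_sq M"
  by (simp add: hs_sq_def scaleR_ent norm_mult power_mult_distrib sum_distrib_left)

abbreviation "r2 \<equiv> complex_of_real (sqrt 2)"

definition mk2 :: "complex \<Rightarrow> complex \<Rightarrow> complex \<Rightarrow> complex \<Rightarrow> qubit_op" where
  "mk2 a b c d = (\<chi> i j. if i = 0 then (if j = 0 then a else b) else (if j = 0 then c else d))"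

definition "e0 = qv 1 0"
definition "e1 = qv 0 1"
definition "xp = qv (1/r2) (1/r2)"
definition "xm = qv (1/r2) (-1/r2)"
definition "yp = qv (1/r2) (\<i>/r2)"
definition "ym = qv (1/r2) (-\<i>/r2)"

lemma sq2: "r2 * r2 = 2"
  unfolding of_real_mult[symmetric] by simp

lemma cnj_r2: "cnj r2 = r2" by simp

lemma G_e0: "gproj e0 = mk2 1 0 0 0"
  by (simp add: vec_eq_iff all2 e0_def mk2_def gproj_def qv_def)
lemma G_e1: "gproj e1 = mk2 0 0 0 1"
  by (simp add: vec_eq_iff all2 e1_def mk2_def gproj_def qv_def)
lemma G_xp: "gproj xp = mk2 (1/2) (1/2) (1/2) (1/2)"
  by (simp add: vec_eq_iff all2 xp_def mk2_def gproj_def qv_def sq2)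
lemma G_xm: "gproj xm = mk2 (1/2) (-1/2) (-1/2) (1/2)"
  by (simp add: vec_eq_iff all2 xm_def mk2_def gproj_def qv_def sq2)
lemma G_yp: "gproj yp = mk2 (1/2) (-\<i>/2) (\<i>/2) (1/2)"
  by (simp add: vec_eq_iff all2 yp_def mk2_def gproj_def qv_def sq2)
lemma G_ym: "gproj ym = mk2 (1/2) (\<i>/2) (-\<i>/2) (1/2)"
  by (simp add: vec_eq_iff all2 ym_def mk2_def gproj_def qv_def sq2)

definition UU :: "nat \<Rightarrow> complex^2" where
  "UU k = (if k = 0 then e0 else if k = 1 then e1 else if k = 2 then e0
     else if k = 3 then e1 else if k = 4 then xp else if k = 5 then xm
     else if k = 6 then xm else if k = 7 then xp
     else if k = 8 then yp else if k = 9 then ym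
     else if k = 10 then yp else ym)"

definition VV :: "nat \<Rightarrow> complex^2" where
  "VV k = (if k = 0 then e0 else if k = 1 then e1 else if k = 2 then e1
     else if k = 3 then e0 else if k = 4 then xp else if k = 5 then xm
     else if k = 6 then xp else if k = 7 then xm
     else if k = 8 then ym else if k = 9 then yp
     else if k = 10 then yp else ym)"

definition bsg :: "nat \<Rightarrow> 2 \<times> 2 \<Rightarrow> complex" where
  "bsg k ab = (let a = fst ab; b = snd ab in
     (if k = 1 then (if a = 0 \<and> b = 0 then 1 else if a = 1 \<and> b = 1 then 1 else 0)
      else if k = 2 then (if a = 0 \<and> b = 0 then 1 else if a = 1 \<and> b = 1 then -1 else 0)
      else if k = 3 then (if a = 0 \<and> b = 1 then 1 else if a = 1 \<and> b = 0 then 1 else 0)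
      else if k = 4 then (if a = 0 \<and> b = 1 then 1 else if a = 1 \<and> b = 0 then -1 else 0)
      else 0))"

lemma bell_bsg: "bell k $ x = bsg k x / r2"
  by (simp add: bell_def bsg_def Let_def)

lemma cnj_bsg: "cnj (bsg k x) = bsg k x"
  by (simp add: bsg_def Let_def)

lemma Psi_ent: "Psi k $ x $ y = bsg k x * bsg k y / 2"
  by (simp add: Psi_def proj_def bell_bsg cnj_bsg sq2)

definition pa :: "nat \<Rightarrow> nat" where
  "pa m = (if m = 0 then 1 else if m = 1 then 3 else if m = 2 then 1 else if m = 3 then 2
     else if m = 4 then 1 else 2)"
definition pb :: "nat \<Rightarrow> nat" where
  "pb m = (if m = 0 then 2 else if m = 1 then 4 else if m = 2 then 3 else if m = 3 then 4
     else if m = 4 then 4 else 3)"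

definition wt :: "nat \<Rightarrow> (nat \<Rightarrow> real) \<Rightarrow> nat \<Rightarrow> real" where
  "wt i lam k = (if i = pa (k div 2) then (lam (pb (k div 2)) + lam i / 3) / 2
     else if i = pb (k div 2) then (lam (pa (k div 2)) + lam i / 3) / 2 else 0)"

lemma sum_12: "(\<Sum>k<(12::nat). f k) = f 0 + f 1 + f 2 + f 3 + f 4 + f 5 + f 6 + f 7 + f 8 + f 9 + f 10 + f 11"
  by (simp add: eval_nat_numeral add_ac)

lemma set14: "{1..4::nat} = {1,2,3,4}" by auto

lemma P12: "Phi 1 2 = (1/2) *\<^sub>R (kron (gproj e0) (gproj e0) + kron (gproj e1) (gproj e1))"
  unfolding vec_eq_iff all22
  apply (simp add: Phi_def Psi_ent bsg_def kron_def mk2_def G_e0 G_e1 G_xp G_xm G_yp G_ym scaleR_ent sR algebra_simps)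
  done

lemma P34: "Phi 3 4 = (1/2) *\<^sub>R (kron (gproj e0) (gproj e1) + kron (gproj e1) (gproj e0))"
  unfolding vec_eq_iff all22
  apply (simp add: Phi_def Psi_ent bsg_def kron_def mk2_def G_e0 G_e1 G_xp G_xm G_yp G_ym scaleR_ent sR algebra_simps)
  done

lemma P13: "Phi 1 3 = (1/2) *\<^sub>R (kron (gproj xp) (gproj xp) + kron (gproj xm) (gproj xm))"
  unfolding vec_eq_iff all22
  apply (simp add: Phi_def Psi_ent bsg_def kron_def mk2_def G_e0 G_e1 G_xp G_xm G_yp G_ym scaleR_ent sR algebra_simps)
  done

lemma P24: "Phi 2 4 = (1/2) *\<^sub>R (kron (gproj xm) (gproj xp) + kron (gproj xp) (gproj xm))"
  unfolding vec_eq_iff all22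
  apply (simp add: Phi_def Psi_ent bsg_def kron_def mk2_def G_e0 G_e1 G_xp G_xm G_yp G_ym scaleR_ent sR algebra_simps)
  done

lemma P14: "Phi 1 4 = (1/2) *\<^sub>R (kron (gproj yp) (gproj ym) + kron (gproj ym) (gproj yp))"
  unfolding vec_eq_iff all22
  apply (simp add: Phi_def Psi_ent bsg_def kron_def mk2_def G_e0 G_e1 G_xp G_xm G_yp G_ym scaleR_ent sR algebra_simps)
  done

lemma P23: "Phi 2 3 = (1/2) *\<^sub>R (kron (gproj yp) (gproj yp) + kron (gproj ym) (gproj ym))"
  unfolding vec_eq_iff all22
  apply (simp add: Phi_def Psi_ent bsg_def kron_def mk2_def G_e0 G_e1 G_xp G_xm G_yp G_ym scaleR_ent sR algebra_simps)
  done

lemma W1: "Werner 1 (1/3) = (1/3) *\<^sub>R (Phi 1 2 + Phi 1 3 + Phi 1 4)"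
  unfolding vec_eq_iff all22
  apply (simp add: Werner_def Phi_def Psi_ent bsg_def mat_def scaleR_ent sR algebra_simps)
  done

lemma W2: "Werner 2 (1/3) = (1/3) *\<^sub>R (Phi 1 2 + Phi 2 3 + Phi 2 4)"
  unfolding vec_eq_iff all22
  apply (simp add: Werner_def Phi_def Psi_ent bsg_def mat_def scaleR_ent sR algebra_simps)
  done

lemma W3: "Werner 3 (1/3) = (1/3) *\<^sub>R (Phi 1 3 + Phi 2 3 + Phi 3 4)"
  unfolding vec_eq_iff all22
  apply (simp add: Werner_def Phi_def Psi_ent bsg_def mat_def scaleR_ent sR algebra_simps)
  done

lemma W4: "Werner 4 (1/3) = (1/3) *\<^sub>R (Phi 1 4 + Phi 2 4 + Phi 3 4)"
  unfolding vec_eq_iff all22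
  apply (simp add: Werner_def Phi_def Psi_ent bsg_def mat_def scaleR_ent sR algebra_simps)
  done

lemma Phi_sym: "Phi a b = Phi b a"
  by (simp add: Phi_def add.commute)

lemma set_minus_1: "{1..4::nat} - {1} = {2,3,4}" by auto

lemma dec_1: "lam 1 *\<^sub>R Werner 1 (1/3) + (\<Sum>j\<in>{1..4} - {1}. lam j *\<^sub>R Phi 1 j)
   = (\<Sum>k<12. wt 1 lam k *\<^sub>R kron (gproj (UU k)) (gproj (VV k)))"
proof -
  have L: "lam 1 *\<^sub>R Werner 1 (1/3) + (\<Sum>j\<in>{1..4} - {1}. lam j *\<^sub>R Phi 1 j) = (lam 2 + lam 1/3) *\<^sub>R Phi 1 2 + (lam 3 + lam 1/3) *\<^sub>R Phi 1 3 + (lam 4 + lam 1/3) *\<^sub>R Phi 1 4"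
    unfolding W1 set_minus_1 by (simp add:  algebra_simps)
  have R: "(\<Sum>k<12. wt 1 lam k *\<^sub>R kron (gproj (UU k)) (gproj (VV k))) = (lam 2 + lam 1/3) *\<^sub>R Phi 1 2 + (lam 3 + lam 1/3) *\<^sub>R Phi 1 3 + (lam 4 + lam 1/3) *\<^sub>R Phi 1 4"
    unfolding sum_12 P12 P13 P14 by (simp add: wt_def pa_def pb_def UU_def VV_def algebra_simps scaleR_add_left add_divide_distrib)
  show ?thesis using L R by simp
qed

lemma set_minus_2: "{1..4::nat} - {2} = {1,3,4}" by auto

lemma dec_2: "lam 2 *\<^sub>R Werner 2 (1/3) + (\<Sum>j\<in>{1..4} - {2}. lam j *\<^sub>R Phi 2 j)
   = (\<Sum>k<12. wt 2 lam k *\<^sub>R kron (gproj (UU k)) (gproj (VV k)))"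
proof -
  have L: "lam 2 *\<^sub>R Werner 2 (1/3) + (\<Sum>j\<in>{1..4} - {2}. lam j *\<^sub>R Phi 2 j) = (lam 1 + lam 2/3) *\<^sub>R Phi 1 2 + (lam 3 + lam 2/3) *\<^sub>R Phi 2 3 + (lam 4 + lam 2/3) *\<^sub>R Phi 2 4"
    unfolding W2 set_minus_2 by (simp add: Phi_sym[of 2 1] Phi_sym[of 2 "Suc 0"] algebra_simps)
  have R: "(\<Sum>k<12. wt 2 lam k *\<^sub>R kron (gproj (UU k)) (gproj (VV k))) = (lam 1 + lam 2/3) *\<^sub>R Phi 1 2 + (lam 3 + lam 2/3) *\<^sub>R Phi 2 3 + (lam 4 + lam 2/3) *\<^sub>R Phi 2 4"
    unfolding sum_12 P12 P23 P24 by (simp add: wt_def pa_def pb_def UU_def VV_def algebra_simps scaleR_add_left add_divide_distrib)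
  show ?thesis using L R by simp
qed

lemma set_minus_3: "{1..4::nat} - {3} = {1,2,4}" by auto

lemma dec_3: "lam 3 *\<^sub>R Werner 3 (1/3) + (\<Sum>j\<in>{1..4} - {3}. lam j *\<^sub>R Phi 3 j)
   = (\<Sum>k<12. wt 3 lam k *\<^sub>R kron (gproj (UU k)) (gproj (VV k)))"
proof -
  have L: "lam 3 *\<^sub>R Werner 3 (1/3) + (\<Sum>j\<in>{1..4} - {3}. lam j *\<^sub>R Phi 3 j) = (lam 1 + lam 3/3) *\<^sub>R Phi 1 3 + (lam 2 + lam 3/3) *\<^sub>R Phi 2 3 + (lam 4 + lam 3/3) *\<^sub>R Phi 3 4"
    unfolding W3 set_minus_3 by (simp add: Phi_sym[of 3 1] Phi_sym[of 3 "Suc 0"] Phi_sym[of 3 2] algebra_simps)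
  have R: "(\<Sum>k<12. wt 3 lam k *\<^sub>R kron (gproj (UU k)) (gproj (VV k))) = (lam 1 + lam 3/3) *\<^sub>R Phi 1 3 + (lam 2 + lam 3/3) *\<^sub>R Phi 2 3 + (lam 4 + lam 3/3) *\<^sub>R Phi 3 4"
    unfolding sum_12 P13 P23 P34 by (simp add: wt_def pa_def pb_def UU_def VV_def algebra_simps scaleR_add_left add_divide_distrib)
  show ?thesis using L R by simp
qed

lemma set_minus_4: "{1..4::nat} - {4} = {1,2,3}" by auto

lemma dec_4: "lam 4 *\<^sub>R Werner 4 (1/3) + (\<Sum>j\<in>{1..4} - {4}. lam j *\<^sub>R Phi 4 j)
   = (\<Sum>k<12. wt 4 lam k *\<^sub>R kron (gproj (UU k)) (gproj (VV k)))"
proof -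
  have L: "lam 4 *\<^sub>R Werner 4 (1/3) + (\<Sum>j\<in>{1..4} - {4}. lam j *\<^sub>R Phi 4 j) = (lam 1 + lam 4/3) *\<^sub>R Phi 1 4 + (lam 2 + lam 4/3) *\<^sub>R Phi 2 4 + (lam 3 + lam 4/3) *\<^sub>R Phi 3 4"
    unfolding W4 set_minus_4 by (simp add: Phi_sym[of 4 1] Phi_sym[of 4 "Suc 0"] Phi_sym[of 4 2] Phi_sym[of 4 3] algebra_simps)
  have R: "(\<Sum>k<12. wt 4 lam k *\<^sub>R kron (gproj (UU k)) (gproj (VV k))) = (lam 1 + lam 4/3) *\<^sub>R Phi 1 4 + (lam 2 + lam 4/3) *\<^sub>R Phi 2 4 + (lam 3 + lam 4/3) *\<^sub>R Phi 3 4"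
    unfolding sum_12 P14 P24 P34 by (simp add: wt_def pa_def pb_def UU_def VV_def algebra_simps scaleR_add_left add_divide_distrib)
  show ?thesis using L R by simp
qed

lemma dec: assumes "i \<in> {1..4}"
  shows "lam i *\<^sub>R Werner i (1/3) + (\<Sum>j\<in>{1..4} - {i}. lam j *\<^sub>R Phi i j)
   = (\<Sum>k<12. wt i lam k *\<^sub>R kron (gproj (UU k)) (gproj (VV k)))"
proof -
  have "i = 1 \<or> i = 2 \<or> i = 3 \<or> i = 4" using assms by auto
  then show ?thesis
  proof (elim disjE)
    assume h: "i = 1" show ?thesis unfolding h by (rule dec_1)
  next
    assume h: "i = 2" show ?thesis unfolding h by (rule dec_2)
  next
    assume h: "i = 3" show ?thesis unfolding h by (rule dec_3)
  next
    assume h: "i = 4" show ?thesis unfolding h by (rule dec_4)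
  qed
qed

lemma unitv_qv: "unitv (qv a b) \<longleftrightarrow> (cmod a)\<^sup>2 + (cmod b)\<^sup>2 = 1"
  by (simp add: unitv_def sum2 qv_def)

lemma unitv_six: "unitv e0" "unitv e1" "unitv xp" "unitv xm" "unitv yp" "unitv ym"
  by (simp_all add: unitv_qv e0_def e1_def xp_def xm_def yp_def ym_def norm_divide power_divide)

lemma unitv_UU: "unitv (UU k)" and unitv_VV: "unitv (VV k)"
  by (simp_all add: UU_def VV_def unitv_six)

lemma pa_in: "pa m \<in> {1..4}" by (simp add: pa_def)
lemma pb_in: "pb m \<in> {1..4}" by (simp add: pb_def)

lemma wt_nonneg:
  assumes "\<forall>k\<in>{1..4}. lam k \<ge> 0" "i \<in> {1..4}"
  shows "0 \<le> wt i lam k"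
proof -
  have "0 \<le> lam (pa (k div 2))" "0 \<le> lam (pb (k div 2))" "0 \<le> lam i"
    using assms pa_in pb_in by blast+
  then show ?thesis unfolding wt_def by simp
qed

lemma wt_sum:
  assumes "i \<in> {1..4}" "lam 1 + lam 2 + lam 3 + lam 4 = 1"
  shows "(\<Sum>k<12. wt i lam k) = 1"
proof -
  have "i = 1 \<or> i = 2 \<or> i = 3 \<or> i = 4" using assms by auto
  then show ?thesis using assms(2) by (elim disjE) (simp_all add: sum_12 wt_def pa_def pb_def field_simps)
qed

lemma hs_W:
  assumes "i \<in> {1..4}"
  shows "hs_sq (Werner i (1/3) - Psi i) = 1/3"
proof -
  have "i = 1 \<or> i = 2 \<or> i = 3 \<or> i = 4" using assms by auto
  then show ?thesis
    by (elim disjE) (simp_all add: hs_sq_def sum22 Werner_def Psi_ent bsg_def mat_def scaleR_ent sR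
        norm_divide power_divide)
qed

lemma sig_facts:
  assumes "i \<in> {1..4}" "\<sigma> = lam i *\<^sub>R Psi i + (\<Sum>j\<in>{1..4} - {i}. lam j *\<^sub>R Phi i j)"
  shows "bq i \<sigma> = lam i + (lam 1 + lam 2 + lam 3 + lam 4 - lam i) / 2 \<and>
   Re (mtrace \<sigma>) = lam 1 + lam 2 + lam 3 + lam 4"
proof -
  have "i = 1 \<or> i = 2 \<or> i = 3 \<or> i = 4" using assms by auto
  then show ?thesis
  proof (elim disjE)
    assume h: "i = 1"
    show ?thesis using assms(2) unfolding h set_minus_1
      by (simp add: bq_def mtrace_def sum22 Phi_def Psi_ent bsg_def scaleR_ent sR field_simps)
  next
    assume h: "i = 2"
    show ?thesis using assms(2) unfolding h set_minus_2
      by (simp add: bq_def mtrace_def sum22 Phi_def Psi_ent bsg_def scaleR_ent sR field_simps)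
  next
    assume h: "i = 3"
    show ?thesis using assms(2) unfolding h set_minus_3
      by (simp add: bq_def mtrace_def sum22 Phi_def Psi_ent bsg_def scaleR_ent sR field_simps)
  next
    assume h: "i = 4"
    show ?thesis using assms(2) unfolding h set_minus_4
      by (simp add: bq_def mtrace_def sum22 Phi_def Psi_ent bsg_def scaleR_ent sR field_simps)
  qed
qed

theorem proposition1:
  fixes i :: nat and lam :: "nat \<Rightarrow> real"
  assumes "i \<in> {1..4}"
    and "\<forall>k\<in>{1..4}. lam k \<ge> 0"
    and "(\<Sum>k\<in>{1..4}. lam k) = 1"
  defines "\<sigma> \<equiv> lam i *\<^sub>R Psi i + (\<Sum>j\<in>{1..4} - {i}. lam j *\<^sub>R Phi i j)"
    and "\<sigma>' \<equiv> lam i *\<^sub>R Werner i (1/3) + (\<Sum>j\<in>{1..4} - {i}. lam j *\<^sub>R Phi i j)"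
  shows "disentangled \<sigma>'
         \<and> (\<forall>\<rho>. disentangled \<rho> \<longrightarrow> hs_sq (\<sigma>' - \<sigma>) \<le> hs_sq (\<rho> - \<sigma>))
         \<and> E_HS \<sigma> = (lam i)\<^sup>2 / 3"
proof -
  have i4: "i = 1 \<or> i = 2 \<or> i = 3 \<or> i = 4" using assms(1) by auto
  have S1: "lam 1 + lam 2 + lam 3 + lam 4 = 1" using assms(3) unfolding set14 by simp
  have li: "0 \<le> lam i" using assms(1,2) by blast
  have sep: "disentangled \<sigma>'"
  proof (rule sep_intro[where n=12 and p="wt i lam" and u=UU and w=VV])
    show "0 \<le> wt i lam k \<and> unitv (UU k) \<and> unitv (VV k)" if "k < 12" for k
      using wt_nonneg[OF assms(2) assms(1)] unitv_UU unitv_VV by blast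
    show "(\<Sum>k<12. wt i lam k) = 1" by (rule wt_sum[OF assms(1) S1])
    show "\<sigma>' = (\<Sum>k<12. wt i lam k *\<^sub>R kron (gproj (UU k)) (gproj (VV k)))"
      unfolding \<sigma>'_def by (rule dec[OF assms(1)])
  qed
  have diff: "hs_sq (\<sigma>' - \<sigma>) = (lam i)\<^sup>2 / 3"
  proof -
    have "\<sigma>' - \<sigma> = lam i *\<^sub>R (Werner i (1/3) - Psi i)"
      by (simp add: \<sigma>'_def \<sigma>_def scaleR_diff_right)
    then show ?thesis using hs_W[OF assms(1)] by (simp add: hs_sq_scale)
  qed
  have sf: "bq i \<sigma> = lam i + (lam 1 + lam 2 + lam 3 + lam 4 - lam i) / 2 \<and>
      Re (mtrace \<sigma>) = lam 1 + lam 2 + lam 3 + lam 4"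
    by (rule sig_facts[OF assms(1)]) (simp add: \<sigma>_def)
  then have bs: "bq i \<sigma> = lam i + (1 - lam i) / 2" and ts: "Re (mtrace \<sigma>) = 1"
    using S1 by auto
  have low: "(lam i)\<^sup>2 / 3 \<le> hs_sq (\<rho> - \<sigma>)" if r: "disentangled \<rho>" for \<rho>
  proof -
    define D where "D = \<rho> - \<sigma>"
    have y: "bq k D = bq k \<rho> - bq k \<sigma>" for k by (simp add: D_def bq_diff)
    have tr: "bq 1 D + bq 2 D + bq 3 D + bq 4 D = 0"
    proof -
      have "Re (mtrace \<rho>) = 1" using r by (simp add: disentangled_def is_state_def)
      then have "Re (mtrace D) = 0" using ts by (simp add: D_def mtrace_def sum_subtractf)
      then show ?thesis using bq_trace by simp
    qed
    have yi: "bq i D \<le> - (lam i / 2)" using sep_bq[OF r assms(1)] bs y[of i] by (simp add: field_simps)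
    have li2: "0 \<le> lam i / 2" using li by simp
    have "4 * (lam i / 2)\<^sup>2 / 3 \<le> (bq 1 D)\<^sup>2 + (bq 2 D)\<^sup>2 + (bq 3 D)\<^sup>2 + (bq 4 D)\<^sup>2"
      using i4
    proof (elim disjE)
      assume "i = 1"
      show ?thesis by (rule key4) (use tr yi li2 \<open>i = 1\<close> in auto)
    next
      assume "i = 2"
      have "4 * (lam i / 2)\<^sup>2 / 3 \<le> (bq 2 D)\<^sup>2 + (bq 1 D)\<^sup>2 + (bq 3 D)\<^sup>2 + (bq 4 D)\<^sup>2"
        by (rule key4) (use tr yi li2 \<open>i = 2\<close> in auto)
      then show ?thesis by linarith
    next
      assume "i = 3"
      have "4 * (lam i / 2)\<^sup>2 / 3 \<le> (bq 3 D)\<^sup>2 + (bq 1 D)\<^sup>2 + (bq 2 D)\<^sup>2 + (bq 4 D)\<^sup>2"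
        by (rule key4) (use tr yi li2 \<open>i = 3\<close> in auto)
      then show ?thesis by linarith
    next
      assume "i = 4"
      have "4 * (lam i / 2)\<^sup>2 / 3 \<le> (bq 4 D)\<^sup>2 + (bq 1 D)\<^sup>2 + (bq 2 D)\<^sup>2 + (bq 3 D)\<^sup>2"
        by (rule key4) (use tr yi li2 \<open>i = 4\<close> in auto)
      then show ?thesis by linarith
    qed
    also have "\<dots> \<le> hs_sq D" by (rule hs_bound)
    finally show ?thesis by (simp add: D_def power_divide)
  qed
  have E: "E_HS \<sigma> = (lam i)\<^sup>2 / 3"
    unfolding E_HS_def
  proof (rule cInf_eq_minimum)
    show "(lam i)\<^sup>2 / 3 \<in> (\<lambda>\<rho>. hs_sq (\<rho> - \<sigma>)) ` {\<rho>. disentangled \<rho>}"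
      using sep diff by (metis (mono_tags, lifting) mem_Collect_eq rev_image_eqI)
    show "\<And>x. x \<in> (\<lambda>\<rho>. hs_sq (\<rho> - \<sigma>)) ` {\<rho>. disentangled \<rho>} \<Longrightarrow> (lam i)\<^sup>2 / 3 \<le> x"
      using low by auto
  qed
  have all: "\<forall>\<rho>. disentangled \<rho> \<longrightarrow> hs_sq (\<sigma>' - \<sigma>) \<le> hs_sq (\<rho> - \<sigma>)"
  proof (intro allI impI)
    fix \<rho> assume "disentangled \<rho>"
    then show "hs_sq (\<sigma>' - \<sigma>) \<le> hs_sq (\<rho> - \<sigma>)" unfolding diff by (rule low)
  qed
  show ?thesis using sep all E by blast
qed

end
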